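(* Let $E$ be a nonempty closed convex subset of a real Hilbert space $H$ and let $S:E\to E$ be a $(\lambda,\gamma)$-generalized hybrid mapping for some $\lambda,\gamma\in\mathbb{R}$ with $F(S)\neq\emptyset$. Let $\{\alpha_n\}$ satisfy $0<\alpha\le\alpha_n\le 1$ for all $n$ (for some constant $\alpha>0$), and let $\{\beta_n\}$ be a sequence in $[b,1]$ for some $b\in(0,1)$ with $\liminf_{n\to\infty}\beta_n(1-\beta_n)>0$. Let $\{x_n\}$ and $\{u_n\}$ be generated by $x_1=x\in E$ and, for all $n\in\mathbb{N}$, $$u_n\in E \text{ such that } \langle y-u_n,u_n-x_n\rangle\ge 0 \quad\text{for all } y\in E,$$ $$y_n=(1-\beta_n)x_n+\beta_n Su_n,\qquad x_{n+1}=(1-\alpha_n)x_n+\alpha_n Sy_n.$$ Then $\{x_n\}$ converges weakly to a point $v\in F(S)$, where $v=\lim_{n\to\infty}P_{F(S)}(x_n)$.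
   Context: $F(S)=\{x\in E: Sx=x\}$. A mapping $S:E\to E$ is $(\lambda,\gamma)$-generalized hybrid if $\lambda\|Sx-Sy\|^2+(1-\lambda)\|x-Sy\|^2\le \gamma\|Sx-y\|^2+(1-\gamma)\|x-y\|^2$ for all $x,y\in E$. For a nonempty closed convex $K\subset H$, $P_K$ is the metric (nearest point) projection of $H$ onto $K$; the limit defining $v$ is in norm. *)

theory Defs
  imports "HOL-Analysis.Analysis"
begin

definition fixset :: "'a set \<Rightarrow> ('a \<Rightarrow> 'a) \<Rightarrow> 'a set" where
  "fixset E S = {x \<in> E. S x = x}"

definition gen_hybrid :: "'a::real_normed_vector set \<Rightarrow> real \<Rightarrow> real \<Rightarrow> ('a \<Rightarrow> 'a) \<Rightarrow> bool" where
  "gen_hybrid E lam gam S \<longleftrightarrow> S ` E \<subseteq> E \<and>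
     (\<forall>x\<in>E. \<forall>y\<in>E. lam * (norm (S x - S y))\<^sup>2 + (1 - lam) * (norm (x - S y))\<^sup>2
        \<le> gam * (norm (S x - y))\<^sup>2 + (1 - gam) * (norm (x - y))\<^sup>2)"

definition metric_proj :: "'a::real_normed_vector set \<Rightarrow> 'a \<Rightarrow> 'a" where
  "metric_proj K z = (SOME p. p \<in> K \<and> (\<forall>y\<in>K. norm (z - p) \<le> norm (z - y)))"

definition weak_conv :: "(nat \<Rightarrow> 'a::real_inner) \<Rightarrow> 'a \<Rightarrow> bool" where
  "weak_conv x v \<longleftrightarrow> (\<forall>w. ((\<lambda>n. inner (x n) w) \<longlonglongrightarrow> inner v w))"

end

theory Submission
  imports Defs "HOL-Analysis.Analysis"
begin

lemma sq_comb:
  fixes a b :: "'a::real_inner"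
  shows "(norm ((1-t) *\<^sub>R a + t *\<^sub>R b))\<^sup>2 = (1-t)*(norm a)\<^sup>2 + t*(norm b)\<^sup>2 - t*(1-t)*(norm (a-b))\<^sup>2"
  by (simp add: power2_norm_eq_inner inner_add_left inner_add_right inner_diff_left
      inner_diff_right inner_commute algebra_simps)

lemma sq_diff_expand:
  fixes a b :: "'a::real_inner"
  shows "(norm (a + b))\<^sup>2 = (norm a)\<^sup>2 + 2 * inner a b + (norm b)\<^sup>2"
  by (simp add: power2_norm_eq_inner inner_add_left inner_add_right inner_commute)

lemma sq_lip:
  fixes p y y' :: "'a::real_normed_vector"
  shows "\<bar>(norm (p - y))\<^sup>2 - (norm (p - y'))\<^sup>2\<bar> \<le> (2 * norm p + norm y + norm y') * norm (y - y')"
proof -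
  have "\<bar>norm (p - y) - norm (p - y')\<bar> \<le> norm ((p-y) - (p-y'))" by (rule norm_triangle_ineq3)
  also have "(p-y) - (p-y') = -(y - y')" by simp
  finally have h1: "\<bar>norm (p - y) - norm (p - y')\<bar> \<le> norm (y - y')" by (simp add: norm_minus_commute)
  have h2: "norm (p - y) + norm (p - y') \<le> 2 * norm p + norm y + norm y'"
    using norm_triangle_ineq4[of p y] norm_triangle_ineq4[of p y'] by simp
  have "\<bar>(norm (p - y))\<^sup>2 - (norm (p - y'))\<^sup>2\<bar> = \<bar>norm (p - y) - norm (p - y')\<bar> * (norm (p - y) + norm (p - y'))"
  proof -
    have "(norm (p-y))\<^sup>2 - (norm(p-y'))\<^sup>2 = (norm(p-y) - norm(p-y'))*(norm(p-y)+norm(p-y'))"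
      by (simp add: power2_eq_square algebra_simps)
    then show ?thesis by (simp add: abs_mult)
  qed
  also have "\<dots> \<le> norm (y - y') * (2 * norm p + norm y + norm y')"
    by (rule mult_mono[OF h1 h2]) auto
  finally show ?thesis by (simp add: mult.commute)
qed

lemma lin_help: "(m::real) \<le> (a + b) / 2 - N / 4 \<Longrightarrow> a < m + r \<Longrightarrow> b < m + s \<Longrightarrow> N \<le> 2 * r + 2 * s"
  by argo

lemma minimizer_exists:
  fixes \<phi> :: "'a::{real_inner,complete_space} \<Rightarrow> real"
  assumes K: "K \<noteq> {}" "closed K" "convex K"
    and nn: "\<And>y. y \<in> K \<Longrightarrow> 0 \<le> \<phi> y"
    and mid: "\<And>a b. a \<in> K \<Longrightarrow> b \<in> K \<Longrightarrow>
        \<phi> ((1/2) *\<^sub>R a + (1/2) *\<^sub>R b) \<le> (\<phi> a + \<phi> b)/2 - (norm (a - b))\<^sup>2 / 4"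
    and cont: "\<And>z c. z \<longlonglongrightarrow> c \<Longrightarrow> (\<lambda>n. \<phi> (z n)) \<longlonglongrightarrow> \<phi> c"
  shows "\<exists>c\<in>K. \<forall>y\<in>K. \<phi> c \<le> \<phi> y"
proof -
  define m where "m = Inf (\<phi> ` K)"
  have bdd: "bdd_below (\<phi> ` K)" using nn by (auto intro!: bdd_belowI[of _ 0])
  have lower: "\<And>y. y \<in> K \<Longrightarrow> m \<le> \<phi> y" unfolding m_def using bdd by (auto intro: cInf_lower)
  have "\<forall>n. \<exists>z. z \<in> K \<and> \<phi> z < m + 1 / real (Suc n)"
  proof
    fix n
    have "Inf (\<phi> ` K) < m + 1 / real (Suc n)" unfolding m_def by simp
    then obtain t where "t \<in> \<phi> ` K" "t < m + 1 / real (Suc n)" using cInf_lessD[of "\<phi> ` K"] K by auto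
    then show "\<exists>z. z \<in> K \<and> \<phi> z < m + 1 / real (Suc n)" by auto
  qed
  then obtain z where zK: "\<And>n. z n \<in> K" and zl: "\<And>n. \<phi> (z n) < m + 1 / real (Suc n)" by metis
  have key: "(norm (z i - z j))\<^sup>2 \<le> 2 / real (Suc i) + 2 / real (Suc j)" for i j
  proof -
    have mK: "(1/2) *\<^sub>R z i + (1/2) *\<^sub>R z j \<in> K"
      using convexD[OF K(3) zK zK, of "1/2" "1/2"] by simp
    have "m \<le> (\<phi> (z i) + \<phi> (z j))/2 - (norm (z i - z j))\<^sup>2 / 4"
      using lower[OF mK] mid[OF zK[of i] zK[of j]] by linarith
    then have "(norm (z i - z j))\<^sup>2 \<le> 2 * (1 / real (Suc i)) + 2 * (1 / real (Suc j))"
      by (rule lin_help[OF _ zl[of i] zl[of j]])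
    then show ?thesis by simp
  qed
  have "Cauchy z"
  proof (rule metric_CauchyI)
    fix e :: real assume e: "0 < e"
    obtain N :: nat where N: "4 / e\<^sup>2 < real N" using reals_Archimedean2 by blast
    have Npos: "0 < real N" using N e by (smt (verit) divide_pos_pos zero_less_power)
    show "\<exists>M. \<forall>i\<ge>M. \<forall>j\<ge>M. dist (z i) (z j) < e"
    proof (intro exI allI impI)
      fix i j assume ij: "N \<le> i" "N \<le> j"
      have a: "2 / real (Suc i) < e\<^sup>2 / 2"
      proof -
        have "4 / e\<^sup>2 < real (Suc i)" using N ij by linarith
        then have "4 < e\<^sup>2 * real (Suc i)" using e by (simp add: field_simps)
        then show ?thesis by (simp add: field_simps)
      qed
      have b: "2 / real (Suc j) < e\<^sup>2 / 2"
      proof -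
        have "4 / e\<^sup>2 < real (Suc j)" using N ij by linarith
        then have "4 < e\<^sup>2 * real (Suc j)" using e by (simp add: field_simps)
        then show ?thesis by (simp add: field_simps)
      qed
      have "(dist (z i) (z j))\<^sup>2 < e\<^sup>2" using key[of i j] a b by (simp add: dist_norm)
      then show "dist (z i) (z j) < e" using e by (simp add: power_less_imp_less_base)
    qed
  qed
  then obtain c where zc: "z \<longlonglongrightarrow> c" using Cauchy_convergent convergent_def by blast
  have cK: "c \<in> K" using closed_sequentially[OF K(2) zK zc] .
  have t1: "(\<lambda>n. \<phi> (z n)) \<longlonglongrightarrow> \<phi> c" using cont[OF zc] .
  have t2: "(\<lambda>n. m + 1 / real (Suc n)) \<longlonglongrightarrow> m + 0"
    by (intro tendsto_intros LIMSEQ_Suc[OF lim_inverse_n'])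
  have "\<phi> c \<le> m + 0"
    using t1 t2 zl by (intro LIMSEQ_le[OF t1 t2]) (auto intro: less_imp_le)
  then show ?thesis using cK lower by force
qed


lemma mid_sq:
  fixes z a b :: "'a::real_inner"
  shows "(norm (z - ((1/2) *\<^sub>R a + (1/2) *\<^sub>R b)))\<^sup>2 = (norm (z - a))\<^sup>2 / 2 + (norm (z - b))\<^sup>2 / 2 - (norm (a - b))\<^sup>2 / 4"
  apply (simp add: power2_norm_eq_inner inner_add_left inner_add_right inner_diff_left
      inner_diff_right inner_commute algebra_simps)
  apply (simp add: field_simps)
  done

lemma proj_exists:
  fixes K :: "'a::{real_inner,complete_space} set"
  assumes "K \<noteq> {}" "closed K" "convex K"
  shows "\<exists>p\<in>K. \<forall>y\<in>K. norm (z - p) \<le> norm (z - y)"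
proof -
  have "\<exists>c\<in>K. \<forall>y\<in>K. (\<lambda>y. (norm (z - y))\<^sup>2) c \<le> (\<lambda>y. (norm (z - y))\<^sup>2) y"
  proof (rule minimizer_exists[OF assms])
    fix a b show "(norm (z - ((1/2) *\<^sub>R a + (1/2) *\<^sub>R b)))\<^sup>2 \<le> ((norm (z - a))\<^sup>2 + (norm (z - b))\<^sup>2)/2 - (norm (a - b))\<^sup>2 / 4"
      unfolding mid_sq by simp
  next
    fix w :: "nat \<Rightarrow> 'a" and c assume "w \<longlonglongrightarrow> c"
    then show "(\<lambda>n. (norm (z - w n))\<^sup>2) \<longlonglongrightarrow> (norm (z - c))\<^sup>2" by (intro tendsto_intros)
  qed simp
  then obtain c where "c \<in> K" "\<forall>y\<in>K. (norm (z - c))\<^sup>2 \<le> (norm (z - y))\<^sup>2" by auto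
  then show ?thesis using power2_le_imp_le norm_ge_zero by blast
qed

lemma metric_proj_prop:
  fixes K :: "'a::{real_inner,complete_space} set"
  assumes "K \<noteq> {}" "closed K" "convex K"
  shows "metric_proj K z \<in> K \<and> (\<forall>y\<in>K. norm (z - metric_proj K z) \<le> norm (z - y))"
proof -
  have "\<exists>p. p \<in> K \<and> (\<forall>y\<in>K. norm (z - p) \<le> norm (z - y))" using proj_exists[OF assms] by blast
  from someI_ex[OF this] show ?thesis unfolding metric_proj_def .
qed

lemma small_t:
  fixes g c :: real
  assumes "0 \<le> c" "\<And>t. 0 < t \<Longrightarrow> t \<le> 1 \<Longrightarrow> g \<le> t * c"
  shows "g \<le> 0"
proof (rule ccontr)
  assume "\<not> g \<le> 0" then have g: "g > 0" by simp
  define t where "t = min 1 (g / (2*c+1))"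
  have t: "0 < t" "t \<le> 1" using g assms(1) by (auto simp: t_def)
  have "t * c \<le> g / (2*c+1) * c" using assms(1) by (intro mult_right_mono) (auto simp: t_def)
  also have "\<dots> < g" using g assms(1) by (simp add: field_simps add_pos_nonneg)
  finally show False using assms(2)[OF t] by simp
qed

lemma proj_char:
  fixes K :: "'a::real_inner set"
  assumes "convex K" "p \<in> K" "\<forall>y\<in>K. norm (z - p) \<le> norm (z - y)" "y \<in> K"
  shows "inner (z - p) (y - p) \<le> 0"
proof -
  have "inner (z - p) (y - p) \<le> 0"
  proof (rule small_t[of "(norm (y - p))\<^sup>2 / 2"])
    fix t :: real assume t: "0 < t" "t \<le> 1"
    have inK: "(1 - t) *\<^sub>R p + t *\<^sub>R y \<in> K" using convexD[OF assms(1) assms(2) assms(4), of "1-t" t] t by simp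
    have eq: "z - ((1 - t) *\<^sub>R p + t *\<^sub>R y) = (z - p) + (- t) *\<^sub>R (y - p)"
      by (simp add: algebra_simps)
    have "(norm (z - p))\<^sup>2 \<le> (norm (z - ((1 - t) *\<^sub>R p + t *\<^sub>R y)))\<^sup>2"
      using assms(3) inK by (simp add: power_mono)
    also have "\<dots> = (norm (z - p))\<^sup>2 - 2 * t * inner (z - p) (y - p) + t\<^sup>2 * (norm (y - p))\<^sup>2"
      unfolding eq sq_diff_expand by (simp add: power_mult_distrib)
    finally have "2 * t * inner (z - p) (y - p) \<le> t * (t * (norm (y - p))\<^sup>2)"
      by (simp add: power2_eq_square)
    then have "2 * inner (z - p) (y - p) \<le> t * (norm (y - p))\<^sup>2" using t by simp
    then show "inner (z - p) (y - p) \<le> t * ((norm (y - p))\<^sup>2 / 2)" by simp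
  qed simp
  then show ?thesis .
qed

lemma proj_pyth:
  fixes K :: "'a::real_inner set"
  assumes "convex K" "p \<in> K" "\<forall>y\<in>K. norm (z - p) \<le> norm (z - y)" "y \<in> K"
  shows "(norm (y - p))\<^sup>2 + (norm (p - z))\<^sup>2 \<le> (norm (y - z))\<^sup>2"
proof -
  have i: "inner (z - p) (y - p) \<le> 0" by (rule proj_char[OF assms])
  have "y - z = (y - p) + (p - z)" by simp
  then have "(norm (y - z))\<^sup>2 = (norm (y - p))\<^sup>2 + 2 * inner (y - p) (p - z) + (norm (p - z))\<^sup>2"
    using sq_diff_expand[of "y-p" "p-z"] by simp
  moreover have "inner (y - p) (p - z) = - inner (z - p) (y - p)"
    by (simp add: inner_commute inner_diff_left inner_diff_right)
  ultimately show ?thesis using i by simp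
qed


locale setting =
  fixes E :: "'a::{real_inner, complete_space} set"
    and S :: "'a \<Rightarrow> 'a" and lam gam :: real
    and as bs :: "nat \<Rightarrow> real" and \<alpha> :: real
    and x :: "nat \<Rightarrow> 'a"
  assumes En: "E \<noteq> {}" and Ec: "closed E" and Ecv: "convex E"
    and hyb: "gen_hybrid E lam gam S"
    and Fn: "fixset E S \<noteq> {}"
    and apos: "0 < \<alpha>" and abnd: "\<And>n. \<alpha> \<le> as n \<and> as n \<le> 1"
    and bbnd: "\<And>n. 0 \<le> bs n \<and> bs n \<le> 1"
    and blim: "liminf (\<lambda>n. ereal (bs n * (1 - bs n))) > 0"
    and x0: "x 0 \<in> E"
    and xs: "\<And>n. x (Suc n) = (1 - as n) *\<^sub>R x n + as n *\<^sub>R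
                 S ((1 - bs n) *\<^sub>R x n + bs n *\<^sub>R S (x n))"
begin

abbreviation "F \<equiv> fixset E S"

lemma SE: "y \<in> E \<Longrightarrow> S y \<in> E"
  using hyb unfolding gen_hybrid_def by auto

lemma hybI: "y \<in> E \<Longrightarrow> z \<in> E \<Longrightarrow> lam * (norm (S y - S z))\<^sup>2 + (1 - lam) * (norm (y - S z))\<^sup>2
        \<le> gam * (norm (S y - z))\<^sup>2 + (1 - gam) * (norm (y - z))\<^sup>2"
  using hyb unfolding gen_hybrid_def by auto

lemma FE: "p \<in> F \<Longrightarrow> p \<in> E" and Fp: "p \<in> F \<Longrightarrow> S p = p"
  by (auto simp: fixset_def)

lemma lin_same: "l * A + (1 - l) * A = (A::real)" by (simp add: algebra_simps)

lemma quasi: assumes "p \<in> F" "y \<in> E" shows "norm (S y - p) \<le> norm (y - p)"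
proof -
  have h: "lam * (norm (S p - S y))\<^sup>2 + (1 - lam) * (norm (p - S y))\<^sup>2
        \<le> gam * (norm (S p - y))\<^sup>2 + (1 - gam) * (norm (p - y))\<^sup>2"
    using hybI[OF FE[OF assms(1)] assms(2)] .
  have sp: "S p = p" using Fp[OF assms(1)] .
  have "(norm (p - S y))\<^sup>2 \<le> (norm (p - y))\<^sup>2"
    using h unfolding sp lin_same .
  then have "norm (p - S y) \<le> norm (p - y)" by (rule power2_le_imp_le) simp
  then show ?thesis by (simp only: norm_minus_commute)
qed

lemma lin_comb_id: "(1 - v) *\<^sub>R (w - a) + v *\<^sub>R (w - c) = w - ((1-v) *\<^sub>R a + v *\<^sub>R c)"
  for w a c :: 'a by (simp add: algebra_simps)

lemma comb_sub: "(1 - t) *\<^sub>R a + t *\<^sub>R c - p = (1 - t) *\<^sub>R (a - p) + t *\<^sub>R (c - p)"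
  for a c p :: 'a by (simp add: algebra_simps)

lemma comb_in: "a \<in> E \<Longrightarrow> c \<in> E \<Longrightarrow> 0 \<le> t \<Longrightarrow> t \<le> 1 \<Longrightarrow> (1 - t) *\<^sub>R a + t *\<^sub>R c \<in> E"
  using convexD[OF Ecv, of a c "1-t" t] by simp

lemma xE: "x n \<in> E"
proof (induction n)
  case 0 then show ?case using x0 .
next
  case (Suc n)
  have y: "(1 - bs n) *\<^sub>R x n + bs n *\<^sub>R S (x n) \<in> E"
    using comb_in[OF Suc SE[OF Suc]] bbnd[of n] by blast
  have a: "0 \<le> as n" "as n \<le> 1" using abnd[of n] apos by auto
  show ?case unfolding xs using comb_in[OF Suc SE[OF y] a] .
qed

lemma F_closed: "closed F"
proof -
  have "l \<in> F" if f: "\<And>n. f n \<in> F" and l: "f \<longlonglongrightarrow> l" for f l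
  proof -
    have lE: "l \<in> E" using closed_sequentially[OF Ec _ l] f FE by blast
    have n1: "\<forall>n. norm (f n - S l) \<le> norm (f n - l)"
    proof
      fix n
      have "norm (S l - f n) \<le> norm (l - f n)" using quasi[OF f lE] .
      then show "norm (f n - S l) \<le> norm (f n - l)" by (simp only: norm_minus_commute)
    qed
    have n2: "(\<lambda>n. norm (f n - l)) \<longlonglongrightarrow> 0" using tendsto_norm_zero[OF LIM_zero[OF l]] .
    have "(\<lambda>n. f n - S l) \<longlonglongrightarrow> 0"
      by (rule Lim_null_comparison[OF always_eventually[OF n1] n2])
    then have "f \<longlonglongrightarrow> S l" by (rule LIM_zero_cancel)
    then have "S l = l" using LIMSEQ_unique[OF _ l] by blast
    then show ?thesis using lE by (simp add: fixset_def)
  qed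
  then show ?thesis unfolding closed_sequential_limits by blast
qed

lemma F_convex: "convex F"
proof (rule convexI)
  fix a c :: 'a and u v :: real
  assume a: "a \<in> F" and c: "c \<in> F" and uv: "0 \<le> u" "0 \<le> v" "u + v = 1"
  define y where "y = u *\<^sub>R a + v *\<^sub>R c"
  have yE: "y \<in> E" unfolding y_def using convexD[OF Ecv FE[OF a] FE[OF c] uv] .
  have eqy: "(1 - v) *\<^sub>R a + v *\<^sub>R c = y" using uv by (simp add: y_def)
  have u1: "u = 1 - v" using uv by simp
  have "(norm (S y - y))\<^sup>2 = (norm ((1 - v) *\<^sub>R (S y - a) + v *\<^sub>R (S y - c)))\<^sup>2"
    unfolding lin_comb_id eqy ..
  also have "\<dots> = (1-v) * (norm (S y - a))\<^sup>2 + v * (norm (S y - c))\<^sup>2 - v * (1-v) * (norm ((S y - a) - (S y - c)))\<^sup>2"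
    by (rule sq_comb)
  also have "\<dots> \<le> (1-v) * (norm (y - a))\<^sup>2 + v * (norm (y - c))\<^sup>2 - v * (1-v) * (norm (a - c))\<^sup>2"
  proof -
    have "(1-v) * (norm (S y - a))\<^sup>2 \<le> (1-v) * (norm (y - a))\<^sup>2"
      using quasi[OF a yE] uv by (intro mult_left_mono power_mono) auto
    moreover have "v * (norm (S y - c))\<^sup>2 \<le> v * (norm (y - c))\<^sup>2"
      using quasi[OF c yE] uv by (intro mult_left_mono power_mono) auto
    moreover have "norm ((S y - a) - (S y - c)) = norm (a - c)" by (simp add: norm_minus_commute)
    ultimately show ?thesis by simp
  qed
  also have "\<dots> = (norm ((1 - v) *\<^sub>R (y - a) + v *\<^sub>R (y - c)))\<^sup>2"
    by (subst sq_comb) (simp add: norm_minus_commute)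
  also have "(1 - v) *\<^sub>R (y - a) + v *\<^sub>R (y - c) = 0"
    unfolding lin_comb_id eqy by simp
  finally have "S y = y" by simp
  then show "u *\<^sub>R a + v *\<^sub>R c \<in> F" using yE by (simp add: fixset_def y_def)
qed

lemma fejer:
  assumes p: "p \<in> F"
  shows "(norm (x (Suc n) - p))\<^sup>2 \<le> (norm (x n - p))\<^sup>2 - \<alpha> * (bs n * (1 - bs n)) * (norm (x n - S (x n)))\<^sup>2"
proof -
  define y where "y = (1 - bs n) *\<^sub>R x n + bs n *\<^sub>R S (x n)"
  define a where "a = as n"
  define t where "t = bs n"
  define X where "X = (norm (x n - p))\<^sup>2"
  define G where "G = (norm (x n - S (x n)))\<^sup>2"
  have t: "0 \<le> t" "t \<le> 1" using bbnd[of n] unfolding t_def by auto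
  have a: "\<alpha> \<le> a" "a \<le> 1" using abnd[of n] unfolding a_def by auto
  have a0: "0 \<le> a" using a apos by linarith
  have yE: "y \<in> E" unfolding y_def using comb_in[OF xE SE[OF xE]] bbnd[of n] by blast
  have N: "(norm (S (x n) - p))\<^sup>2 \<le> X" unfolding X_def using quasi[OF p xE] by (simp add: power_mono)
  have "(norm (y - p))\<^sup>2 = (norm ((1 - t) *\<^sub>R (x n - p) + t *\<^sub>R (S (x n) - p)))\<^sup>2"
    unfolding y_def t_def comb_sub ..
  also have "\<dots> = (1-t) * X + t * (norm (S (x n) - p))\<^sup>2 - t * (1-t) * G"
    unfolding sq_comb X_def G_def by simp
  also have "\<dots> \<le> (1-t) * X + t * X - t * (1-t) * G"
    using mult_left_mono[OF N t(1)] by linarith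
  also have "\<dots> = X - t * (1-t) * G" by (simp add: algebra_simps)
  finally have Y: "(norm (y - p))\<^sup>2 \<le> X - t * (1-t) * G" .
  have N2: "(norm (S y - p))\<^sup>2 \<le> (norm (y - p))\<^sup>2" using quasi[OF p yE] by (simp add: power_mono)
  have "(norm (x (Suc n) - p))\<^sup>2 = (norm ((1 - a) *\<^sub>R (x n - p) + a *\<^sub>R (S y - p)))\<^sup>2"
    unfolding xs y_def[symmetric] a_def comb_sub ..
  also have "\<dots> = (1-a) * X + a * (norm (S y - p))\<^sup>2 - a * (1-a) * (norm (x n - S y))\<^sup>2"
    unfolding sq_comb X_def by simp
  also have "\<dots> \<le> (1-a) * X + a * (norm (S y - p))\<^sup>2"
  proof -
    have "0 \<le> a * (1-a) * (norm (x n - S y))\<^sup>2" using a a0 by simp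
    then show ?thesis by linarith
  qed
  also have "\<dots> \<le> (1-a) * X + a * (X - t * (1-t) * G)"
    using mult_left_mono[OF order.trans[OF N2 Y] a0] by linarith
  also have "\<dots> = X - a * (t * (1-t) * G)"
    by (simp add: algebra_simps)
  also have "\<dots> \<le> X - \<alpha> * (t * (1-t) * G)"
  proof -
    have "0 \<le> t * (1-t) * G" using t unfolding G_def by simp
    then have "\<alpha> * (t * (1-t) * G) \<le> a * (t * (1-t) * G)" using a by (intro mult_right_mono) auto
    then show ?thesis by linarith
  qed
  finally show ?thesis unfolding X_def G_def t_def by (simp add: mult.assoc)
qed

lemma fejer1: "p \<in> F \<Longrightarrow> norm (x (Suc n) - p) \<le> norm (x n - p)"
proof -
  assume p: "p \<in> F"
  have b0: "0 \<le> bs n * (1 - bs n)" using bbnd[of n] by simp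
  have "0 \<le> \<alpha> * (bs n * (1 - bs n)) * (norm (x n - S (x n)))\<^sup>2"
  proof -
    have "0 \<le> \<alpha> * (bs n * (1 - bs n))" using apos b0 by simp
    from mult_nonneg_nonneg[OF this zero_le_power2] show ?thesis .
  qed
  then have "(norm (x (Suc n) - p))\<^sup>2 \<le> (norm (x n - p))\<^sup>2" using fejer[OF p, of n] by linarith
  then show ?thesis by (rule power2_le_imp_le) simp
qed

lemma fejer_mono: "p \<in> F \<Longrightarrow> n \<le> m \<Longrightarrow> norm (x m - p) \<le> norm (x n - p)"
proof (induction m)
  case 0 then show ?case by simp
next
  case (Suc m)
  show ?case
  proof (cases "n \<le> m")
    case True
    then show ?thesis using Suc.IH[OF Suc.prems(1) True] fejer1[OF Suc.prems(1), of m] by linarith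
  next
    case False
    then have "n = Suc m" using Suc.prems(2) by simp
    then show ?thesis by simp
  qed
qed

lemma x_bounded: "\<exists>M. \<forall>n. norm (x n) \<le> M"
proof -
  obtain p where p: "p \<in> F" using Fn by blast
  have "norm (x n) \<le> norm (x 0 - p) + norm p" for n
  proof -
    have "norm (x n) \<le> norm p + norm (x n - p)" by (rule norm_triangle_sub)
    moreover have "norm (x n - p) \<le> norm (x 0 - p)" using fejer_mono[OF p, of 0 n] by simp
    ultimately show ?thesis by linarith
  qed
  then show ?thesis by blast
qed

end

lemma sq_lip':
  fixes p y y' :: "'a::real_normed_vector"
  shows "\<bar>(norm (y - p))\<^sup>2 - (norm (y' - p))\<^sup>2\<bar> \<le> (2 * norm p + norm y + norm y') * norm (y - y')"
  using sq_lip[of p y y'] by (simp only: norm_minus_commute)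

context setting begin

lemma dist_conv: assumes p: "p \<in> F" shows "\<exists>L. (\<lambda>n. (norm (x n - p))\<^sup>2) \<longlonglongrightarrow> L"
proof -
  have d: "decseq (\<lambda>n. (norm (x n - p))\<^sup>2)"
  proof (rule decseq_SucI)
    fix n show "(norm (x (Suc n) - p))\<^sup>2 \<le> (norm (x n - p))\<^sup>2"
      using fejer1[OF p, of n] by (simp add: power_mono)
  qed
  have "\<forall>i. 0 \<le> (norm (x i - p))\<^sup>2" by simp
  from decseq_convergent[OF d this] show ?thesis by blast
qed

lemma liminf_pos: "\<exists>c>0. eventually (\<lambda>n. c < bs n * (1 - bs n)) sequentially"
proof -
  obtain z :: ereal where z: "0 < z" "z < liminf (\<lambda>n. ereal (bs n * (1 - bs n)))"
    using dense[OF blim] by blast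
  have ev: "eventually (\<lambda>n. z < ereal (bs n * (1 - bs n))) sequentially"
    using less_LiminfD[OF z(2)] .
  show ?thesis
  proof (cases z)
    case (real r)
    then show ?thesis using z(1) ev by auto
  next
    case PInf then show ?thesis using z(2) by simp
  next
    case MInf then show ?thesis using z(1) by simp
  qed
qed

lemma reg: "(\<lambda>n. S (x n) - x n) \<longlonglongrightarrow> 0"
proof -
  obtain p where p: "p \<in> F" using Fn by blast
  obtain L where L: "(\<lambda>n. (norm (x n - p))\<^sup>2) \<longlonglongrightarrow> L" using dist_conv[OF p] by blast
  obtain c where c: "c > 0" "eventually (\<lambda>n. c < bs n * (1 - bs n)) sequentially"
    using liminf_pos by blast
  define d where "d n = (norm (x n - p))\<^sup>2" for n
  have L1: "(\<lambda>n. d (Suc n)) \<longlonglongrightarrow> L" using LIMSEQ_Suc[OF L] unfolding d_def .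
  have diff: "(\<lambda>n. (d n - d (Suc n)) / (\<alpha> * c)) \<longlonglongrightarrow> (L - L) / (\<alpha> * c)"
    using L L1 apos c(1) unfolding d_def by (intro tendsto_intros) auto
  have sq: "(\<lambda>n. sqrt ((d n - d (Suc n)) / (\<alpha> * c))) \<longlonglongrightarrow> sqrt ((L - L) / (\<alpha> * c))"
    by (rule tendsto_real_sqrt[OF diff])
  have ac: "0 < \<alpha> * c" using apos c(1) by simp
  have ev: "eventually (\<lambda>n. norm (S (x n) - x n) \<le> sqrt ((d n - d (Suc n)) / (\<alpha> * c))) sequentially"
    using c(2)
  proof (rule eventually_mono)
    fix n assume cn: "c < bs n * (1 - bs n)"
    have f: "(norm (x (Suc n) - p))\<^sup>2 \<le> (norm (x n - p))\<^sup>2 - \<alpha> * (bs n * (1 - bs n)) * (norm (x n - S (x n)))\<^sup>2"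
      using fejer[OF p, of n] .
    have "\<alpha> * c * (norm (x n - S (x n)))\<^sup>2 \<le> \<alpha> * (bs n * (1 - bs n)) * (norm (x n - S (x n)))\<^sup>2"
      using cn apos by (intro mult_right_mono mult_left_mono) auto
    then have "\<alpha> * c * (norm (x n - S (x n)))\<^sup>2 \<le> d n - d (Suc n)" using f unfolding d_def by linarith
    then have "(norm (S (x n) - x n))\<^sup>2 \<le> (d n - d (Suc n)) / (\<alpha> * c)"
      using ac by (simp add: field_simps norm_minus_commute)
    then show "norm (S (x n) - x n) \<le> sqrt ((d n - d (Suc n)) / (\<alpha> * c))" by (rule real_le_rsqrt)
  qed
  show ?thesis
    by (rule Lim_null_comparison[OF ev]) (use sq in simp)
qed

lemma Sx_bounded: "\<exists>M. \<forall>n. norm (S (x n)) \<le> M"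
proof -
  obtain p where p: "p \<in> F" using Fn by blast
  obtain M where M: "\<forall>n. norm (x n) \<le> M" using x_bounded by blast
  have "norm (S (x n)) \<le> M + 2 * norm p" for n
  proof -
    have "norm (S (x n)) \<le> norm p + norm (S (x n) - p)" by (rule norm_triangle_sub)
    also have "\<dots> \<le> norm p + norm (x n - p)" using quasi[OF p xE] by simp
    also have "norm (x n - p) \<le> norm (x n) + norm p" by (rule norm_triangle_ineq4)
    finally show ?thesis using M[rule_format, of n] by linarith
  qed
  then show ?thesis by blast
qed

definition q :: "nat \<Rightarrow> 'a" where "q n = metric_proj F (x n)"

lemma Fne: "F \<noteq> {}" using Fn .

lemma qprop: "q n \<in> F \<and> (\<forall>y\<in>F. norm (x n - q n) \<le> norm (x n - y))"
  unfolding q_def by (rule metric_proj_prop[OF Fne F_closed F_convex])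

lemma q_step:
  assumes "n \<le> m"
  shows "(norm (q m - q n))\<^sup>2 \<le> (norm (x n - q n))\<^sup>2 - (norm (x m - q m))\<^sup>2"
proof -
  have qm: "q m \<in> F" "\<forall>y\<in>F. norm (x m - q m) \<le> norm (x m - y)" using qprop[of m] by auto
  have qn: "q n \<in> F" using qprop[of n] by auto
  have h1: "(norm (q m - q n))\<^sup>2 + (norm (x m - q m))\<^sup>2 \<le> (norm (x m - q n))\<^sup>2"
    using proj_pyth[OF F_convex qm(1) qm(2) qn] by (simp add: norm_minus_commute)
  have "norm (x m - q n) \<le> norm (x n - q n)" using fejer_mono[OF qn assms] .
  then have h3: "(norm (x m - q n))\<^sup>2 \<le> (norm (x n - q n))\<^sup>2"
    by (simp add: power_mono)
  show ?thesis using h1 h3 by linarith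
qed

lemma q_conv: "\<exists>v\<in>F. q \<longlonglongrightarrow> v"
proof -
  define A where "A n = (norm (x n - q n))\<^sup>2" for n
  have dA: "decseq A"
  proof (rule decseq_SucI)
    fix n
    have "n \<le> Suc n" by simp
    from q_step[OF this] have "(norm (q (Suc n) - q n))\<^sup>2 \<le> A n - A (Suc n)" unfolding A_def .
    moreover have "0 \<le> (norm (q (Suc n) - q n))\<^sup>2" by simp
    ultimately show "A (Suc n) \<le> A n" by linarith
  qed
  have "\<forall>i. 0 \<le> A i" unfolding A_def by simp
  from decseq_convergent[OF dA this] obtain LA where LA: "A \<longlonglongrightarrow> LA" by blast
  then have CA: "Cauchy A" by (rule LIMSEQ_imp_Cauchy)
  have "Cauchy q"
  proof (rule metric_CauchyI)
    fix e :: real assume e: "0 < e"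
    have e2: "0 < e\<^sup>2" using e by simp
    obtain M where M: "\<forall>m\<ge>M. \<forall>n\<ge>M. dist (A m) (A n) < e\<^sup>2"
      using metric_CauchyD[OF CA e2] by blast
    have "dist (q m) (q n) < e" if mn: "m \<ge> M" "n \<ge> M" for m n
    proof -
      have "(norm (q m - q n))\<^sup>2 < e\<^sup>2"
      proof (cases "n \<le> m")
        case True
        have s: "(norm (q m - q n))\<^sup>2 \<le> A n - A m" using q_step[OF True] unfolding A_def .
        have "dist (A m) (A n) < e\<^sup>2" using M mn by blast
        then have "\<bar>A m - A n\<bar> < e\<^sup>2" by (simp add: dist_real_def)
        then show ?thesis using s by linarith
      next
        case False
        then have mn': "m \<le> n" by simp
        have s: "(norm (q n - q m))\<^sup>2 \<le> A m - A n" using q_step[OF mn'] unfolding A_def .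
        have "dist (A m) (A n) < e\<^sup>2" using M mn by blast
        then have "\<bar>A m - A n\<bar> < e\<^sup>2" by (simp add: dist_real_def)
        then show ?thesis using s by (simp add: norm_minus_commute)
      qed
      then show ?thesis using e by (simp add: dist_norm power_less_imp_less_base)
    qed
    then show "\<exists>M. \<forall>m\<ge>M. \<forall>n\<ge>M. dist (q m) (q n) < e" by blast
  qed
  then obtain v where v: "q \<longlonglongrightarrow> v" using Cauchy_convergent convergent_def by blast
  have "\<And>n. q n \<in> F" using qprop by blast
  from closed_sequentially[OF F_closed this v] have "v \<in> F" .
  then show ?thesis using v by blast
qed

end

lemma delta_id:
  fixes X Q V P :: "'a::real_inner"
  shows "inner (X - V) (P - V) - inner (X - Q) (P - Q) = inner X (Q - V) + (inner Q P - inner Q Q - inner V P + inner V V)"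
  by (simp add: inner_diff_left inner_diff_right inner_commute algebra_simps)

lemma hyb_rearr:
  fixes l g A B C D :: real
  assumes "l * A + (1 - l) * B \<le> g * C + (1 - g) * D"
  shows "B \<le> D + (g * (C - D) - l * (A - B))"
  using assms by (simp add: algebra_simps)

context setting begin

lemma asym:
  assumes v: "q \<longlonglongrightarrow> v" and p: "p \<in> F" and e: "0 < e"
  shows "eventually (\<lambda>n. inner (x n - v) (p - v) \<le> e) sequentially"
proof -
  obtain M where M: "\<forall>n. norm (x n) \<le> M" using x_bounded by blast
  have nq: "(\<lambda>n. norm (q n - v)) \<longlonglongrightarrow> 0" using tendsto_norm_zero[OF LIM_zero[OF v]] .
  have g0: "(\<lambda>n. M * norm (q n - v)) \<longlonglongrightarrow> M * 0" by (intro tendsto_intros nq)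
  have T1: "(\<lambda>n. inner (x n) (q n - v)) \<longlonglongrightarrow> 0"
  proof (rule Lim_null_comparison)
    show "eventually (\<lambda>n. norm (inner (x n) (q n - v)) \<le> M * norm (q n - v)) sequentially"
    proof (rule always_eventually, rule allI)
      fix n
      have "norm (inner (x n) (q n - v)) \<le> norm (x n) * norm (q n - v)"
        using Cauchy_Schwarz_ineq2 by simp
      also have "\<dots> \<le> M * norm (q n - v)" using M by (simp add: mult_right_mono)
      finally show "norm (inner (x n) (q n - v)) \<le> M * norm (q n - v)" .
    qed
    show "(\<lambda>n. M * norm (q n - v)) \<longlonglongrightarrow> 0" using g0 by simp
  qed
  have T2: "(\<lambda>n. inner (q n) p - inner (q n) (q n) - inner v p + inner v v) \<longlonglongrightarrow>
      inner v p - inner v v - inner v p + inner v v"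
    by (intro tendsto_intros v)
  have T: "(\<lambda>n. inner (x n) (q n - v) + (inner (q n) p - inner (q n) (q n) - inner v p + inner v v)) \<longlonglongrightarrow> 0 + 0"
    using tendsto_add[OF T1 T2] by simp
  have ev: "eventually (\<lambda>n. inner (x n) (q n - v) + (inner (q n) p - inner (q n) (q n) - inner v p + inner v v) < e) sequentially"
    using order_tendstoD(2)[OF T] e by simp
  show ?thesis using ev
  proof (rule eventually_mono)
    fix n assume "inner (x n) (q n - v) + (inner (q n) p - inner (q n) (q n) - inner v p + inner v v) < e"
    then have d: "inner (x n - v) (p - v) - inner (x n - q n) (p - q n) < e" unfolding delta_id .
    have "inner (x n - q n) (p - q n) \<le> 0"
      using proj_char[OF F_convex _ _ p] qprop[of n] by blast
    then show "inner (x n - v) (p - v) \<le> e" using d by linarith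
  qed
qed

lemma demi_err:
  assumes cE: "c \<in> E"
  shows "\<exists>err. err \<longlonglongrightarrow> 0 \<and> (\<forall>n. (norm (x n - S c))\<^sup>2 \<le> (norm (x n - c))\<^sup>2 + err n)"
proof -
  obtain M where M: "\<forall>n. norm (x n) \<le> M" using x_bounded by blast
  obtain M2 where M2: "\<forall>n. norm (S (x n)) \<le> M2" using Sx_bounded by blast
  define K where "K = 2 * norm c + 2 * norm (S c) + M + M2"
  define err where "err n = gam * ((norm (S (x n) - c))\<^sup>2 - (norm (x n - c))\<^sup>2)
      - lam * ((norm (S (x n) - S c))\<^sup>2 - (norm (x n - S c))\<^sup>2)" for n
  have ineq: "(norm (x n - S c))\<^sup>2 \<le> (norm (x n - c))\<^sup>2 + err n" for n
    unfolding err_def by (rule hyb_rearr[OF hybI[OF xE cE]])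
  have bnd: "norm (err n) \<le> (\<bar>gam\<bar> + \<bar>lam\<bar>) * K * norm (S (x n) - x n)" for n
  proof -
    define r where "r = norm (S (x n) - x n)"
    have r0: "0 \<le> r" unfolding r_def by simp
    have l1: "\<bar>(norm (S (x n) - c))\<^sup>2 - (norm (x n - c))\<^sup>2\<bar> \<le> (2 * norm c + norm (S (x n)) + norm (x n)) * r"
      unfolding r_def by (rule sq_lip')
    have l2: "\<bar>(norm (S (x n) - S c))\<^sup>2 - (norm (x n - S c))\<^sup>2\<bar> \<le> (2 * norm (S c) + norm (S (x n)) + norm (x n)) * r"
      unfolding r_def by (rule sq_lip')
    have nc: "0 \<le> norm c" "0 \<le> norm (S c)" by simp_all
    have Mn: "norm (x n) \<le> M" "norm (S (x n)) \<le> M2" using M M2 by blast+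
    have "2 * norm c + norm (S (x n)) + norm (x n) \<le> K" unfolding K_def using nc Mn by linarith
    from mult_right_mono[OF this r0]
    have k1: "(2 * norm c + norm (S (x n)) + norm (x n)) * r \<le> K * r" .
    have "2 * norm (S c) + norm (S (x n)) + norm (x n) \<le> K" unfolding K_def using nc Mn by linarith
    from mult_right_mono[OF this r0]
    have k2: "(2 * norm (S c) + norm (S (x n)) + norm (x n)) * r \<le> K * r" .
    have "\<bar>err n\<bar> \<le> \<bar>gam\<bar> * \<bar>(norm (S (x n) - c))\<^sup>2 - (norm (x n - c))\<^sup>2\<bar>
        + \<bar>lam\<bar> * \<bar>(norm (S (x n) - S c))\<^sup>2 - (norm (x n - S c))\<^sup>2\<bar>"
      unfolding err_def by (simp add: abs_mult[symmetric] abs_triangle_ineq4)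
    also have "\<dots> \<le> \<bar>gam\<bar> * (K * r) + \<bar>lam\<bar> * (K * r)"
      using order.trans[OF l1 k1] order.trans[OF l2 k2]
      by (intro add_mono mult_left_mono) auto
    also have "\<dots> = (\<bar>gam\<bar> + \<bar>lam\<bar>) * K * r" by (simp add: algebra_simps)
    finally show ?thesis unfolding r_def by simp
  qed
  have nr: "(\<lambda>n. norm (S (x n) - x n)) \<longlonglongrightarrow> 0" using tendsto_norm_zero[OF reg] .
  have g0: "(\<lambda>n. (\<bar>gam\<bar> + \<bar>lam\<bar>) * K * norm (S (x n) - x n)) \<longlonglongrightarrow> (\<bar>gam\<bar> + \<bar>lam\<bar>) * K * 0"
    by (intro tendsto_intros nr)
  have "err \<longlonglongrightarrow> 0"
    by (rule Lim_null_comparison[OF always_eventually]) (use bnd g0 in auto)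
  then show ?thesis using ineq by blast
qed

end

definition rls :: "(nat \<Rightarrow> real) \<Rightarrow> real" where
  "rls f = Inf {r. eventually (\<lambda>k. f k \<le> r) sequentially}"

lemma rls_set_lower:
  fixes f :: "nat \<Rightarrow> real"
  assumes "\<And>k. 0 \<le> f k" "r \<in> {r. eventually (\<lambda>k. f k \<le> r) sequentially}"
  shows "0 \<le> r"
proof -
  from assms(2) obtain N where "\<forall>n\<ge>N. f n \<le> r" by (auto simp: eventually_sequentially)
  then have "f N \<le> r" by simp
  then show ?thesis using assms(1)[of N] by linarith
qed

lemma rls_least:
  fixes f :: "nat \<Rightarrow> real"
  assumes "\<And>k. 0 \<le> f k" "eventually (\<lambda>k. f k \<le> r) sequentially"
  shows "rls f \<le> r"
  unfolding rls_def
proof (rule cInf_lower)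
  show "r \<in> {r. eventually (\<lambda>k. f k \<le> r) sequentially}" using assms(2) by simp
  show "bdd_below {r. eventually (\<lambda>k. f k \<le> r) sequentially}"
    by (rule bdd_belowI[of _ 0]) (rule rls_set_lower[OF assms(1)])
qed

lemma rls_upper:
  fixes f :: "nat \<Rightarrow> real"
  assumes "\<And>k. 0 \<le> f k" "\<And>k. f k \<le> B" "0 < e"
  shows "eventually (\<lambda>k. f k \<le> rls f + e) sequentially"
proof -
  let ?X = "{r. eventually (\<lambda>k. f k \<le> r) sequentially}"
  have ne: "?X \<noteq> {}" using assms(2) by (auto intro!: exI[of _ B])
  have "Inf ?X < Inf ?X + e" using assms(3) by simp
  then obtain r where r: "r \<in> ?X" "r < rls f + e" using cInf_lessD[OF ne] unfolding rls_def by blast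
  from r(1) have "eventually (\<lambda>k. f k \<le> r) sequentially" by simp
  then show ?thesis by (rule eventually_mono) (use r(2) in linarith)
qed

lemma rls_nonneg:
  fixes f :: "nat \<Rightarrow> real"
  assumes "\<And>k. 0 \<le> f k" "\<And>k. f k \<le> B"
  shows "0 \<le> rls f"
  unfolding rls_def
proof (rule cInf_greatest)
  show "{r. eventually (\<lambda>k. f k \<le> r) sequentially} \<noteq> {}" using assms(2) by (auto intro!: exI[of _ B])
  show "\<And>r. r \<in> {r. eventually (\<lambda>k. f k \<le> r) sequentially} \<Longrightarrow> 0 \<le> r"
    by (rule rls_set_lower[OF assms(1)])
qed

lemma ev_witness: "eventually P sequentially \<Longrightarrow> \<exists>k. P k"
  by (auto simp: eventually_sequentially)

context setting begin

lemma no_bad_subseq: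
  fixes s :: "nat \<Rightarrow> nat"
  assumes v: "q \<longlonglongrightarrow> v" "v \<in> F" and s: "strict_mono s" and eps: "0 < \<epsilon>"
    and big: "\<And>k. \<epsilon> \<le> inner (x (s k) - v) w"
  shows False
proof -
  obtain M where M: "\<forall>n. norm (x n) \<le> M" using x_bounded by blast
  define y where "y k = x (s k)" for k
  have yM: "norm (y k) \<le> M" for k using M unfolding y_def by blast
  have yE: "y k \<in> E" for k unfolding y_def by (rule xE)
  define \<phi> where "\<phi> z = rls (\<lambda>k. (norm (y k - z))\<^sup>2)" for z
  have nn: "\<And>k. 0 \<le> (norm (y k - z))\<^sup>2" for z by simp
  have ub: "(norm (y k - z))\<^sup>2 \<le> (M + norm z)\<^sup>2" for k z
  proof -
    have "norm (y k - z) \<le> norm (y k) + norm z" by (rule norm_triangle_ineq4)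
    also have "\<dots> \<le> M + norm z" using yM[of k] by simp
    finally show ?thesis by (simp add: power_mono)
  qed
  have U: "eventually (\<lambda>k. (norm (y k - z))\<^sup>2 \<le> \<phi> z + e) sequentially" if "0 < e" for z e
    unfolding \<phi>_def by (rule rls_upper[OF nn ub that])
  have L: "\<phi> z \<le> r" if "eventually (\<lambda>k. (norm (y k - z))\<^sup>2 \<le> r) sequentially" for z r
    unfolding \<phi>_def by (rule rls_least[OF nn that])
  have mid: "\<phi> ((1/2) *\<^sub>R a + (1/2) *\<^sub>R b) \<le> (\<phi> a + \<phi> b)/2 - (norm (a - b))\<^sup>2 / 4" for a b
  proof (rule field_le_epsilon)
    fix e :: real assume e: "0 < e"
    have "eventually (\<lambda>k. (norm (y k - ((1/2) *\<^sub>R a + (1/2) *\<^sub>R b)))\<^sup>2 \<le> (\<phi> a + \<phi> b)/2 - (norm (a - b))\<^sup>2 / 4 + e) sequentially"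
      using eventually_conj[OF U[OF e, of a] U[OF e, of b]]
    proof (rule eventually_mono)
      fix k assume h: "(norm (y k - a))\<^sup>2 \<le> \<phi> a + e \<and> (norm (y k - b))\<^sup>2 \<le> \<phi> b + e"
      show "(norm (y k - ((1/2) *\<^sub>R a + (1/2) *\<^sub>R b)))\<^sup>2 \<le> (\<phi> a + \<phi> b)/2 - (norm (a - b))\<^sup>2 / 4 + e"
        unfolding mid_sq using h by argo
    qed
    then show "\<phi> ((1/2) *\<^sub>R a + (1/2) *\<^sub>R b) \<le> (\<phi> a + \<phi> b)/2 - (norm (a - b))\<^sup>2 / 4 + e" by (rule L)
  qed
  have lip: "\<phi> z \<le> \<phi> z' + (2 * M + norm z + norm z') * norm (z - z')" for z z'
  proof (rule field_le_epsilon)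
    fix e :: real assume e: "0 < e"
    have "eventually (\<lambda>k. (norm (y k - z))\<^sup>2 \<le> \<phi> z' + (2 * M + norm z + norm z') * norm (z - z') + e) sequentially"
      using U[OF e, of z']
    proof (rule eventually_mono)
      fix k assume h: "(norm (y k - z'))\<^sup>2 \<le> \<phi> z' + e"
      have l: "\<bar>(norm (y k - z))\<^sup>2 - (norm (y k - z'))\<^sup>2\<bar> \<le> (2 * norm (y k) + norm z + norm z') * norm (z - z')"
        by (rule sq_lip)
      have "(2 * norm (y k) + norm z + norm z') * norm (z - z') \<le> (2 * M + norm z + norm z') * norm (z - z')"
        using yM[of k] by (intro mult_right_mono) auto
      then show "(norm (y k - z))\<^sup>2 \<le> \<phi> z' + (2 * M + norm z + norm z') * norm (z - z') + e"
        using l h by linarith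
    qed
    then show "\<phi> z \<le> \<phi> z' + (2 * M + norm z + norm z') * norm (z - z') + e" by (rule L)
  qed
  have cont: "(\<lambda>n. \<phi> (z n)) \<longlonglongrightarrow> \<phi> c" if zc: "z \<longlonglongrightarrow> c" for z c
  proof (rule LIM_zero_cancel, rule Lim_null_comparison)
    show "eventually (\<lambda>n. norm (\<phi> (z n) - \<phi> c) \<le> (2 * M + norm (z n) + norm c) * norm (z n - c)) sequentially"
    proof (rule always_eventually, rule allI)
      fix n
      have a1: "\<phi> (z n) \<le> \<phi> c + (2 * M + norm (z n) + norm c) * norm (z n - c)" by (rule lip)
      have a2: "\<phi> c \<le> \<phi> (z n) + (2 * M + norm c + norm (z n)) * norm (c - z n)" by (rule lip)
      have "norm (c - z n) = norm (z n - c)" by (rule norm_minus_commute)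
      then show "norm (\<phi> (z n) - \<phi> c) \<le> (2 * M + norm (z n) + norm c) * norm (z n - c)"
        using a1 a2 by (simp add: algebra_simps)
    qed
    have "(\<lambda>n. (2 * M + norm (z n) + norm c) * norm (z n - c)) \<longlonglongrightarrow> (2 * M + norm c + norm c) * 0"
      by (intro tendsto_intros zc tendsto_norm_zero LIM_zero)
    then show "(\<lambda>n. (2 * M + norm (z n) + norm c) * norm (z n - c)) \<longlonglongrightarrow> 0" by simp
  qed
  have phinn: "0 \<le> \<phi> z" for z unfolding \<phi>_def by (rule rls_nonneg[OF nn ub])
  obtain c where cmin: "\<forall>z\<in>UNIV. \<phi> c \<le> \<phi> z"
    using minimizer_exists[of UNIV \<phi>, OF _ _ _ phinn mid cont] by blast
  have cmin': "\<phi> c \<le> \<phi> z" for z using cmin by blast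
  define p where "p = metric_proj E c"
  have pp: "p \<in> E" "\<forall>y\<in>E. norm (c - p) \<le> norm (c - y)"
    using metric_proj_prop[OF En Ec Ecv, of c] unfolding p_def by auto
  have "\<phi> p \<le> \<phi> c - (norm (p - c))\<^sup>2"
  proof (rule field_le_epsilon)
    fix e :: real assume e: "0 < e"
    have "eventually (\<lambda>k. (norm (y k - p))\<^sup>2 \<le> \<phi> c - (norm (p - c))\<^sup>2 + e) sequentially"
      using U[OF e, of c]
    proof (rule eventually_mono)
      fix k assume h: "(norm (y k - c))\<^sup>2 \<le> \<phi> c + e"
      have "(norm (y k - p))\<^sup>2 + (norm (p - c))\<^sup>2 \<le> (norm (y k - c))\<^sup>2"
        by (rule proj_pyth[OF Ecv pp(1) pp(2) yE])
      then show "(norm (y k - p))\<^sup>2 \<le> \<phi> c - (norm (p - c))\<^sup>2 + e" using h by linarith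
    qed
    then show "\<phi> p \<le> \<phi> c - (norm (p - c))\<^sup>2 + e" by (rule L)
  qed
  then have "(norm (p - c))\<^sup>2 \<le> 0" using cmin'[of p] by linarith
  then have "p = c" by simp
  then have cE: "c \<in> E" using pp(1) by simp
  obtain err where err: "err \<longlonglongrightarrow> 0" "\<forall>n. (norm (x n - S c))\<^sup>2 \<le> (norm (x n - c))\<^sup>2 + err n"
    using demi_err[OF cE] by blast
  have errs: "(\<lambda>k. err (s k)) \<longlonglongrightarrow> 0" using LIMSEQ_subseq_LIMSEQ[OF err(1) s] by (simp add: o_def)
  have "\<phi> (S c) \<le> \<phi> c"
  proof (rule field_le_epsilon)
    fix e :: real assume e: "0 < e"
    have e2: "0 < e/2" using e by simp
    have ee: "eventually (\<lambda>k. err (s k) < e/2) sequentially" using order_tendstoD(2)[OF errs e2] .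
    have "eventually (\<lambda>k. (norm (y k - S c))\<^sup>2 \<le> \<phi> c + e) sequentially"
      using eventually_conj[OF ee U[OF e2, of c]]
    proof (rule eventually_mono)
      fix k assume h: "err (s k) < e/2 \<and> (norm (y k - c))\<^sup>2 \<le> \<phi> c + e/2"
      have "(norm (y k - S c))\<^sup>2 \<le> (norm (y k - c))\<^sup>2 + err (s k)" using err(2) unfolding y_def by blast
      then show "(norm (y k - S c))\<^sup>2 \<le> \<phi> c + e" using h by linarith
    qed
    then show "\<phi> (S c) \<le> \<phi> c + e" by (rule L)
  qed
  moreover have "\<phi> c \<le> \<phi> ((1/2) *\<^sub>R c + (1/2) *\<^sub>R S c)" by (rule cmin')
  moreover note mid[of c "S c"]
  ultimately have "(norm (c - S c))\<^sup>2 \<le> 0" by argo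
  then have Sc: "S c = c" by simp
  have cF: "c \<in> F" using cE Sc by (simp add: fixset_def)
  obtain D where D: "(\<lambda>n. (norm (x n - v))\<^sup>2) \<longlonglongrightarrow> D" using dist_conv[OF v(2)] by blast
  have Ds: "(\<lambda>k. (norm (y k - v))\<^sup>2) \<longlonglongrightarrow> D"
    using LIMSEQ_subseq_LIMSEQ[OF D s] unfolding y_def by (simp add: o_def)
  have lowD: "D \<le> \<phi> c"
  proof (rule field_le_epsilon)
    fix e :: real assume e: "0 < e"
    have e4: "0 < e/4" using e by simp
    have a1: "eventually (\<lambda>k. inner (y k - v) (c - v) \<le> e/4) sequentially"
      unfolding y_def using eventually_subseq[OF s asym[OF v(1) cF e4]] .
    have a2: "eventually (\<lambda>k. D - e/4 < (norm (y k - v))\<^sup>2) sequentially"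
      using order_tendstoD(1)[OF Ds] e4 by simp
    obtain k where k: "inner (y k - v) (c - v) \<le> e/4" "D - e/4 < (norm (y k - v))\<^sup>2"
        "(norm (y k - c))\<^sup>2 \<le> \<phi> c + e/4"
      using ev_witness[OF eventually_conj[OF a1 eventually_conj[OF a2 U[OF e4, of c]]]] by blast
    have "y k - c = (y k - v) + (- 1) *\<^sub>R (c - v)" by simp
    then have "(norm (y k - c))\<^sup>2 = (norm (y k - v))\<^sup>2 + 2 * inner (y k - v) ((- 1) *\<^sub>R (c - v)) + (norm ((- 1) *\<^sub>R (c - v)))\<^sup>2"
      using sq_diff_expand by metis
    moreover have "inner (y k - v) ((- 1) *\<^sub>R (c - v)) = - inner (y k - v) (c - v)"
      by (simp only: inner_scaleR_right)
    moreover have "norm ((- 1) *\<^sub>R (c - v)) = norm (c - v)" by (simp only: norm_scaleR abs_minus_cancel abs_one mult_1)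
    ultimately have "(norm (y k - c))\<^sup>2 = (norm (y k - v))\<^sup>2 - 2 * inner (y k - v) (c - v) + (norm (c - v))\<^sup>2"
      by (metis (no_types, lifting) diff_conv_add_uminus mult_minus_right)
    moreover have "0 \<le> (norm (c - v))\<^sup>2" by simp
    ultimately show "D \<le> \<phi> c + e" using k by linarith
  qed
  have upt: "\<phi> (v + t *\<^sub>R w) \<le> D - 2 * t * \<epsilon> + t\<^sup>2 * (norm w)\<^sup>2" if t: "0 < t" for t
  proof (rule field_le_epsilon)
    fix e :: real assume e: "0 < e"
    have a2: "eventually (\<lambda>k. (norm (y k - v))\<^sup>2 < D + e) sequentially"
      using order_tendstoD(2)[OF Ds] e by simp
    have "eventually (\<lambda>k. (norm (y k - (v + t *\<^sub>R w)))\<^sup>2 \<le> D - 2 * t * \<epsilon> + t\<^sup>2 * (norm w)\<^sup>2 + e) sequentially"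
      using a2
    proof (rule eventually_mono)
      fix k assume h: "(norm (y k - v))\<^sup>2 < D + e"
      have "y k - (v + t *\<^sub>R w) = (y k - v) + (- t) *\<^sub>R w" by simp
      then have "(norm (y k - (v + t *\<^sub>R w)))\<^sup>2 = (norm (y k - v))\<^sup>2 + 2 * inner (y k - v) ((- t) *\<^sub>R w) + (norm ((- t) *\<^sub>R w))\<^sup>2"
        using sq_diff_expand by metis
      then have eq: "(norm (y k - (v + t *\<^sub>R w)))\<^sup>2 = (norm (y k - v))\<^sup>2 - 2 * t * inner (y k - v) w + t\<^sup>2 * (norm w)\<^sup>2"
        by (simp add: power_mult_distrib)
      have "t * \<epsilon> \<le> t * inner (y k - v) w" using big[of k] t unfolding y_def by simp
      then show "(norm (y k - (v + t *\<^sub>R w)))\<^sup>2 \<le> D - 2 * t * \<epsilon> + t\<^sup>2 * (norm w)\<^sup>2 + e"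
        using eq h by linarith
    qed
    then show "\<phi> (v + t *\<^sub>R w) \<le> D - 2 * t * \<epsilon> + t\<^sup>2 * (norm w)\<^sup>2 + e" by (rule L)
  qed
  have w0: "w \<noteq> 0" using big[of 0] eps by auto
  define W where "W = (norm w)\<^sup>2"
  have W: "0 < W" using w0 unfolding W_def by simp
  define t where "t = \<epsilon> / W"
  have t: "0 < t" using eps W unfolding t_def by simp
  have "D \<le> D - 2 * t * \<epsilon> + t\<^sup>2 * W"
    using lowD cmin'[of "v + t *\<^sub>R w"] upt[OF t] unfolding W_def by linarith
  moreover have "t\<^sup>2 * W = t * \<epsilon>" using W unfolding t_def by (simp add: power2_eq_square)
  ultimately have "0 \<le> - t * \<epsilon>" by (simp add: mult.commute)
  moreover have "0 < t * \<epsilon>" using t eps by simp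
  ultimately show False by simp
qed

end

context setting begin

lemma weak:
  assumes v: "q \<longlonglongrightarrow> v" "v \<in> F"
  shows "weak_conv x v"
  unfolding weak_conv_def
proof
  fix w
  define z where "z n = inner (x n - v) w" for n
  have "z \<longlonglongrightarrow> 0"
  proof (rule ccontr)
    assume nc: "\<not> z \<longlonglongrightarrow> 0"
    obtain r where r: "0 < r" "\<forall>N. \<exists>n\<ge>N. \<not> norm (z n - 0) < r"
      using nc unfolding LIMSEQ_iff by blast
    define P where "P = {n. r \<le> z n}"
    define Q where "Q = {n. z n \<le> - r}"
    have "infinite {n. \<not> norm (z n - 0) < r}"
      unfolding infinite_nat_iff_unbounded_le using r(2) by blast
    moreover have "{n. \<not> norm (z n - 0) < r} \<subseteq> P \<union> Q" unfolding P_def Q_def by auto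
    ultimately have "infinite (P \<union> Q)" using finite_subset by blast
    then have "infinite P \<or> infinite Q" by simp
    then show False
    proof
      assume "infinite P"
      then obtain s :: "nat \<Rightarrow> nat" where s: "strict_mono s" "\<forall>k. s k \<in> P"
        using infinite_enumerate by blast
      have "\<And>k. r \<le> inner (x (s k) - v) w" using s(2) unfolding P_def z_def by blast
      then show False using no_bad_subseq[OF v s(1) r(1)] by blast
    next
      assume "infinite Q"
      then obtain s :: "nat \<Rightarrow> nat" where s: "strict_mono s" "\<forall>k. s k \<in> Q"
        using infinite_enumerate by blast
      have "r \<le> inner (x (s k) - v) (- w)" for k
      proof -
        have "z (s k) \<le> - r" using s(2) unfolding Q_def by blast
        then show ?thesis unfolding z_def by (simp add: inner_minus_right)
      qed
      then show False using no_bad_subseq[OF v s(1) r(1)] by blast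
    qed
  qed
  then have "(\<lambda>n. inner (x n) w - inner v w) \<longlonglongrightarrow> 0" unfolding z_def by (simp add: inner_diff_left)
  then show "(\<lambda>n. inner (x n) w) \<longlonglongrightarrow> inner v w" by (rule LIM_zero_cancel)
qed

lemma main: "\<exists>v\<in>F. weak_conv x v \<and> (\<lambda>n. metric_proj F (x n)) \<longlonglongrightarrow> v"
proof -
  obtain v where v: "v \<in> F" "q \<longlonglongrightarrow> v" using q_conv by blast
  have "(\<lambda>n. metric_proj F (x n)) = q" by (simp add: q_def fun_eq_iff)
  then show ?thesis using v weak[OF v(2) v(1)] by auto
qed

end

theorem corollary3p2:
  fixes E :: "'a::{real_inner, complete_space} set"
    and S :: "'a \<Rightarrow> 'a" and lam gam :: real
    and \<alpha>s \<beta>s :: "nat \<Rightarrow> real" and \<alpha> b :: real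
    and x u :: "nat \<Rightarrow> 'a" and x0 :: 'a
  assumes "E \<noteq> {}" and "closed E" and "convex E"
    and "gen_hybrid E lam gam S"
    and "fixset E S \<noteq> {}"
    and "0 < \<alpha>" and "\<And>n. \<alpha> \<le> \<alpha>s n \<and> \<alpha>s n \<le> 1"
    and "0 < b" and "b < 1" and "\<And>n. b \<le> \<beta>s n \<and> \<beta>s n \<le> 1"
    and "liminf (\<lambda>n. ereal (\<beta>s n * (1 - \<beta>s n))) > 0"
    and "x0 \<in> E" and "x 0 = x0"
    and "\<And>n. u n \<in> E \<and> (\<forall>y\<in>E. inner (y - u n) (u n - x n) \<ge> 0)"
    and "\<And>n. x (Suc n) = (1 - \<alpha>s n) *\<^sub>R x n + \<alpha>s n *\<^sub>R
                 S ((1 - \<beta>s n) *\<^sub>R x n + \<beta>s n *\<^sub>R S (u n))"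
  shows "\<exists>v\<in>fixset E S. weak_conv x v \<and>
           (\<lambda>n. metric_proj (fixset E S) (x n)) \<longlonglongrightarrow> v"
proof -
  note A = assms
  have SE: "\<And>y. y \<in> E \<Longrightarrow> S y \<in> E" using A(4) unfolding gen_hybrid_def by auto
  have bb: "0 \<le> \<beta>s n \<and> \<beta>s n \<le> 1" for n using A(10)[of n] A(8) by auto
  have aa: "0 \<le> \<alpha>s n \<and> \<alpha>s n \<le> 1" for n using A(7)[of n] A(6) by auto
  have ci: "(1 - t) *\<^sub>R a + t *\<^sub>R c \<in> E" if "a \<in> E" "c \<in> E" "0 \<le> t" "t \<le> 1" for a c t
    using convexD[OF A(3) that(1) that(2), of "1-t" t] that by simp
  have xE: "x n \<in> E" for n
  proof (induction n)
    case 0 then show ?case using A(12) A(13) by simp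
  next
    case (Suc n)
    have un: "u n \<in> E" using A(14)[of n] by blast
    have y: "(1 - \<beta>s n) *\<^sub>R x n + \<beta>s n *\<^sub>R S (u n) \<in> E"
      using ci[OF Suc SE[OF un]] bb[of n] by blast
    show ?case unfolding A(15) using ci[OF Suc SE[OF y]] aa[of n] by blast
  qed
  have ux: "u n = x n" for n
  proof -
    have "0 \<le> inner (x n - u n) (u n - x n)" using A(14)[of n] xE[of n] by blast
    also have "inner (x n - u n) (u n - x n) = - (norm (x n - u n))\<^sup>2"
      by (simp add: power2_norm_eq_inner inner_commute inner_diff_left inner_diff_right)
    finally have "(norm (x n - u n))\<^sup>2 \<le> 0" by simp
    then show ?thesis by simp
  qed
  interpret setting E S lam gam \<alpha>s \<beta>s \<alpha> x
  proof
    show "\<And>n. x (Suc n) = (1 - \<alpha>s n) *\<^sub>R x n + \<alpha>s n *\<^sub>R S ((1 - \<beta>s n) *\<^sub>R x n + \<beta>s n *\<^sub>R S (x n))"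
      using A(15) ux by simp
  qed (use A bb xE in auto)
  show ?thesis using main .
qed


end
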